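(* Let $\mathcal{S}=(\mathcal{T},\mathcal{M},\Sigma)$ be an OBDA specification, $q$ a conjunctive query, $C$ a cover of $q$, and $q_C(\vec x)\leftarrow\bigwedge_{f\in C}q^{\mathrm{ucq}}_{|f}(\vec x_f)$ a cover-based JUCQ perfect rewriting of $q$ with respect to $\mathcal{T}$ and $C$. Then the optimized unfolding $\mathrm{unf}_{\mathrm{opt}}(q_C,\mathcal{M})$ is an $\mathcal{M}$-translation of $q_C$, i.e. $\mathrm{unf}_{\mathrm{opt}}(q_C,\mathcal{M})^{\mathcal{D}}=q_C^{\mathcal{A}_{(\mathcal{M},\mathcal{D})}}$ for every database instance $\mathcal{D}$ of $\Sigma$.
   Context: An OBDA specification consists of a DL-Lite$_\mathcal{R}$ TBox $\mathcal{T}$, a relational schema $\Sigma$, and a set $\mathcal{M}$ of mappings $L(\vec t)\leftsquigarrow V(\vec x)$ ($L$ a concept/role name, $\vec t$ a tuple of terms over $\vec x$ built from function symbols or variables, $V$ a view name with extension $V^{\mathcal{D}}$ given by a query over $\Sigma$, possibly a non-recursive Datalog query with function symbols). The virtual ABox is $\mathcal{A}_{(\mathcal{M},\mathcal{D})}=\{L(\vec t[\vec x\mapsto\vec a])\mid L(\vec t)\leftsquigarrow V(\vec x)\in\mathcal{M},\ \vec a\in V^{\mathcal{D}}\}$. A query $q_t$ is an $\mathcal{M}$-translation of $q'$ if $q_t^{\mathcal{D}}=q'^{\mathcal{A}_{(\mathcal{M},\mathcal{D})}}$ for every instance $\mathcal{D}$. A perfect rewriting $q_r$ of $q'$ w.r.t.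 $\mathcal{T}$ satisfies $\mathrm{cert}(q',(\mathcal{T},\mathcal{A}))=q_r^{\mathcal{A}}$ for all ABoxes $\mathcal{A}$. Unfolding of a CQ $q(\vec x)\leftarrow L_1(\vec v_1),\dots,L_n(\vec v_n)$: the Datalog query $(q_{\mathrm{unf}}(\vec x),\Pi)$ with $\Pi$ a minimal set of rules containing, for every tuple $(m_1,\dots,m_n)$ of mappings with $m_i=L_i(\vec f_i(\vec x_i))\leftsquigarrow V_i(\vec z_i)$ and every mgu $\sigma$ of $\{(L_i(\vec v_i),L_i(\vec f_i(\vec x_i)))\}$, the rule $q_{\mathrm{unf}}(\sigma(\vec x))\leftarrow V_1(\sigma(\vec z_1)),\dots,V_n(\sigma(\vec z_n))$; UCQs are unfolded CQ-wise. Cover: a collection $C$ of nonempty subsets (fragments) of the atom set of $q$ covering it, none included in another; fragment query $q_{|f}(\vec x_f)$ has the atoms of $f$ and answer variables the answer variables of $q$ in $f$ plus existential variables shared with another fragment; $q^{\mathrm{ucq}}_{|f}$ is a UCQ perfect rewriting of it; $q_C$ is a cover-based JUCQ perfect rewriting if it is a perfect rewriting of $q$. Let $\mathrm{Aux}_f$ be fresh predicates, $U_f$ view names for $\mathrm{unf}(q^{\mathrm{ucq}}_{|f},\mathcal{M})$, $\mathcal{M}^{\mathrm{aux}}=\{\mathrm{Aux}_f(\vec x_f)\leftsquigarrow U_f(\vec x_f)\mid f\in C\}$, and $q^{\mathrm{aux}}_C(\vec x)\leftarrow\bigwedge_{f\in C}\mathrm{Aux}_f(\vec x_f)$. Split: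 if $m=L(\vec x)\leftsquigarrow U(\vec x)$ with $U$ a view for a Datalog query $(U(\vec x),\{U(\vec f_i(\vec x_i))\leftarrow B_i\mid1\le i\le n\})$, then $\mathrm{split}(m)=\{L(\vec f_i(\vec x_i))\leftsquigarrow B_i\}$; otherwise $\mathrm{split}(m)=\{m\}$; $\mathrm{split}(\mathcal{M})=\bigcup_m\mathrm{split}(m)$. Signature of $L(\vec f(\vec x))\leftsquigarrow V$ is $(L,\vec f)$. Wrap: for each signature $(L,\vec f)$ with mappings $\{L(\vec f(\vec v_i))\leftsquigarrow V_i(\vec v_i)\}_{i}$ of that signature, replace them by the single mapping $L(\vec f(\vec v))\leftsquigarrow W(\vec v)$, $W$ a fresh view for $(W(\vec v),\{W(\vec v_i)\leftarrow V_i(\vec v_i)\}_i)$; $\mathrm{wrap}(\mathcal{M})$ is the union over all signatures. Optimized unfolding: $\mathrm{unf}_{\mathrm{opt}}(q_C,\mathcal{M}):=\mathrm{unf}(q^{\mathrm{aux}}_C(\vec x),\mathrm{wrap}(\mathrm{split}(\mathcal{M}^{\mathrm{aux}})))$. *)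

theory Defs
  imports Main
begin

text \<open>Terms over variables built from function symbols; ground terms (values / individuals)
  built from database constants and function symbols.\<close>

datatype ('f,'v) trm = Var 'v | Fun 'f "('f,'v) trm list"

datatype ('f,'c) gtrm = GC 'c | GF 'f "('f,'c) gtrm list"

fun subst :: "('v \<Rightarrow> ('f,'w) trm) \<Rightarrow> ('f,'v) trm \<Rightarrow> ('f,'w) trm" where
  "subst \<sigma> (Var x) = \<sigma> x"
| "subst \<sigma> (Fun f ts) = Fun f (map (subst \<sigma>) ts)"

fun inst :: "('v \<Rightarrow> ('f,'c) gtrm) \<Rightarrow> ('f,'v) trm \<Rightarrow> ('f,'c) gtrm" where
  "inst \<nu> (Var x) = \<nu> x"
| "inst \<nu> (Fun f ts) = GF f (map (inst \<nu>) ts)"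

fun vars_t :: "('f,'v) trm \<Rightarrow> 'v list" where
  "vars_t (Var x) = [x]"
| "vars_t (Fun f ts) = concat (map vars_t ts)"

definition vars_l :: "('f,'v) trm list \<Rightarrow> 'v list" where
  "vars_l ts = concat (map vars_t ts)"

definition skel :: "('f,'v) trm list \<Rightarrow> ('f,unit) trm list" where
  "skel ts = map (subst (\<lambda>_. Var ())) ts"

fun num :: "nat \<Rightarrow> ('f,unit) trm \<Rightarrow> ('f,nat) trm \<times> nat"
and nums :: "nat \<Rightarrow> ('f,unit) trm list \<Rightarrow> ('f,nat) trm list \<times> nat" where
  "num n (Var _) = (Var n, Suc n)"
| "num n (Fun f ts) = (let (us, m) = nums n ts in (Fun f us, m))"
| "nums n [] = ([], n)"
| "nums n (t # ts) = (let (u, m) = num n t; (us, k) = nums m ts in (u # us, k))"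

definition unifier :: "('v \<Rightarrow> ('f,'v) trm) \<Rightarrow> (('f,'v) trm \<times> ('f,'v) trm) set \<Rightarrow> bool" where
  "unifier \<sigma> E \<longleftrightarrow> (\<forall>(s,t)\<in>E. subst \<sigma> s = subst \<sigma> t)"

definition is_mgu :: "('v \<Rightarrow> ('f,'v) trm) \<Rightarrow> (('f,'v) trm \<times> ('f,'v) trm) set \<Rightarrow> bool" where
  "is_mgu \<sigma> E \<longleftrightarrow> unifier \<sigma> E \<and>
     (\<forall>\<tau>. unifier \<tau> E \<longrightarrow> (\<exists>\<rho>. \<forall>x. \<tau> x = subst \<rho> (\<sigma> x)))"

section \<open>DL-Lite_R\<close>

datatype ('a,'r) pred = Concept 'a | Role 'r

fun arity :: "('a,'r) pred \<Rightarrow> nat" where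
  "arity (Concept _) = 1" | "arity (Role _) = 2"

datatype 'r role = P 'r | Inv 'r
datatype ('a,'r) basic = At 'a | Ex "'r role"
datatype ('a,'r) concept = CPos "('a,'r) basic" | CNeg "('a,'r) basic"
datatype 'r rexp = RPos "'r role" | RNeg "'r role"
datatype ('a,'r) axiom = CI "('a,'r) basic" "('a,'r) concept" | RI "'r role" "'r rexp"

type_synonym ('a,'r) tbox = "('a,'r) axiom set"
type_synonym ('a,'r,'f,'c) abox = "(('a,'r) pred \<times> ('f,'c) gtrm list) set"

type_synonym ('a,'r,'e) interp = "('a \<Rightarrow> 'e set) \<times> ('r \<Rightarrow> ('e \<times> 'e) set)"

fun role_ext :: "('a,'r,'e) interp \<Rightarrow> 'r role \<Rightarrow> ('e \<times> 'e) set" where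
  "role_ext I (P r) = snd I r"
| "role_ext I (Inv r) = converse (snd I r)"

fun basic_ext :: "('a,'r,'e) interp \<Rightarrow> ('a,'r) basic \<Rightarrow> 'e set" where
  "basic_ext I (At a) = fst I a"
| "basic_ext I (Ex R) = Domain (role_ext I R)"

fun concept_ext :: "('a,'r,'e) interp \<Rightarrow> ('a,'r) concept \<Rightarrow> 'e set" where
  "concept_ext I (CPos B) = basic_ext I B"
| "concept_ext I (CNeg B) = - basic_ext I B"

fun rexp_ext :: "('a,'r,'e) interp \<Rightarrow> 'r rexp \<Rightarrow> ('e \<times> 'e) set" where
  "rexp_ext I (RPos R) = role_ext I R"
| "rexp_ext I (RNeg R) = - role_ext I R"

fun sat_ax :: "('a,'r,'e) interp \<Rightarrow> ('a,'r) axiom \<Rightarrow> bool" where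
  "sat_ax I (CI B C) = (basic_ext I B \<subseteq> concept_ext I C)"
| "sat_ax I (RI R E) = (role_ext I R \<subseteq> rexp_ext I E)"

fun holds :: "('a,'r,'e) interp \<Rightarrow> ('a,'r) pred \<Rightarrow> 'e list \<Rightarrow> bool" where
  "holds I (Concept a) [d] = (d \<in> fst I a)"
| "holds I (Role r) [d, e] = ((d, e) \<in> snd I r)"
| "holds I _ _ = False"

text \<open>Models over the domain of individuals (interpreted by standard names, \<open>Inl\<close>)
  extended by countably many anonymous elements.\<close>
type_synonym ('f,'c) dom = "('f,'c) gtrm + nat"

definition is_model :: "('a,'r) tbox \<Rightarrow> ('a,'r,'f,'c) abox \<Rightarrow> ('a,'r,('f,'c) dom) interp \<Rightarrow> bool" where
  "is_model T A I \<longleftrightarrow> (\<forall>ax\<in>T. sat_ax I ax) \<and> (\<forall>(p,ts)\<in>A. holds I p (map Inl ts))"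

definition wf_abox :: "('a,'r,'f,'c) abox \<Rightarrow> bool" where
  "wf_abox A \<longleftrightarrow> (\<forall>(p,ts)\<in>A. length ts = arity p)"

definition ind :: "('a,'r,'f,'c) abox \<Rightarrow> ('f,'c) gtrm set" where
  "ind A = (\<Union>(p,ts)\<in>A. set ts)"

text \<open>A CQ \<open>q(xs) \<leftarrow> L\<^sub>1(v\<^sub>1),\<dots>,L\<^sub>n(v\<^sub>n)\<close>: answer variables and list of atoms.\<close>
type_synonym ('p,'v) cq = "'v list \<times> ('p \<times> 'v list) list"
type_synonym ('p,'v) ucq = "('p,'v) cq list"

definition wf_cq :: "(('a,'r) pred,'v) cq \<Rightarrow> bool" where
  "wf_cq q \<longleftrightarrow> (\<forall>(p,vs)\<in>set (snd q). length vs = arity p)"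

definition cert :: "'v list \<Rightarrow> (('a,'r) pred \<times> 'v list) set \<Rightarrow> ('a,'r) tbox
                    \<Rightarrow> ('a,'r,'f,'c) abox \<Rightarrow> ('f,'c) gtrm list set" where
  "cert xs B T A = {a. set a \<subseteq> ind A \<and>
      (\<forall>I. is_model T A I \<longrightarrow>
         (\<exists>\<nu>. map \<nu> xs = map Inl a \<and> (\<forall>(p,vs)\<in>B. holds I p (map \<nu> vs))))}"

definition cq_eval :: "('p,'v) cq \<Rightarrow> ('p \<times> ('f,'c) gtrm list) set \<Rightarrow> ('f,'c) gtrm list set" where
  "cq_eval q A = {map \<nu> (fst q) | \<nu>. \<forall>(p,vs)\<in>set (snd q). (p, map \<nu> vs) \<in> A}"

definition ucq_eval :: "('p,'v) ucq \<Rightarrow> ('p \<times> ('f,'c) gtrm list) set \<Rightarrow> ('f,'c) gtrm list set" where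
  "ucq_eval Q A = (\<Union>q\<in>set Q. cq_eval q A)"

text \<open>JUCQ \<open>q\<^sub>C(xs) \<leftarrow> \<And>\<^sub>f\<^sub>\<in>\<^sub>C R f (xf f)\<close>.\<close>
definition jucq_eval :: "'v list \<Rightarrow> 'fr set \<Rightarrow> ('fr \<Rightarrow> 'v list) \<Rightarrow> ('fr \<Rightarrow> ('p,'v) ucq)
                         \<Rightarrow> ('p \<times> ('f,'c) gtrm list) set \<Rightarrow> ('f,'c) gtrm list set" where
  "jucq_eval xs C xf R A = {map \<nu> xs | \<nu>. \<forall>f\<in>C. map \<nu> (xf f) \<in> ucq_eval (R f) A}"

definition ucq_perfect_rewriting ::
  "('a,'r) tbox \<Rightarrow> 'v list \<Rightarrow> (('a,'r) pred \<times> 'v list) set \<Rightarrow> (('a,'r) pred,'v) ucq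
   \<Rightarrow> ('f itself \<times> 'c itself) \<Rightarrow> bool" where
  "ucq_perfect_rewriting T xs B Q _ \<longleftrightarrow>
     (\<forall>A :: ('a,'r,'f,'c) abox. finite A \<and> wf_abox A \<longrightarrow> cert xs B T A = ucq_eval Q A)"

definition jucq_perfect_rewriting ::
  "('a,'r) tbox \<Rightarrow> (('a,'r) pred,'v) cq \<Rightarrow> (('a,'r) pred \<times> 'v list) set set
   \<Rightarrow> ((('a,'r) pred \<times> 'v list) set \<Rightarrow> 'v list)
   \<Rightarrow> ((('a,'r) pred \<times> 'v list) set \<Rightarrow> (('a,'r) pred,'v) ucq)
   \<Rightarrow> ('f itself \<times> 'c itself) \<Rightarrow> bool" where
  "jucq_perfect_rewriting T q C xf R _ \<longleftrightarrow>
     (\<forall>A :: ('a,'r,'f,'c) abox. finite A \<and> wf_abox A \<longrightarrow>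
        cert (fst q) (set (snd q)) T A = jucq_eval (fst q) C xf R A)"

definition is_cover :: "('p,'v) cq \<Rightarrow> ('p \<times> 'v list) set set \<Rightarrow> bool" where
  "is_cover q C \<longleftrightarrow> (\<forall>f\<in>C. f \<noteq> {} \<and> f \<subseteq> set (snd q)) \<and> \<Union>C = set (snd q) \<and>
                     (\<forall>f\<in>C. \<forall>g\<in>C. f \<subseteq> g \<longrightarrow> f = g)"

definition occurs_in :: "'v \<Rightarrow> ('p \<times> 'v list) set \<Rightarrow> bool" where
  "occurs_in v f \<longleftrightarrow> (\<exists>(p,vs)\<in>f. v \<in> set vs)"

text \<open>\<open>xs\<close> is (an enumeration of) the answer variables of the fragment query \<open>q|f\<close>.\<close>
definition frag_answer_vars :: "('p,'v) cq \<Rightarrow> ('p \<times> 'v list) set set \<Rightarrow> ('p \<times> 'v list) set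
                                \<Rightarrow> 'v list \<Rightarrow> bool" where
  "frag_answer_vars q C f xs \<longleftrightarrow> distinct xs \<and>
     set xs = {v \<in> set (fst q). occurs_in v f}
            \<union> {v. v \<notin> set (fst q) \<and> occurs_in v f \<and> (\<exists>g\<in>C. g \<noteq> f \<and> occurs_in v g)}"

text \<open>A view's extension is a function of the database instance \<open>'d\<close>.\<close>
type_synonym ('f,'c,'d) view = "'d \<Rightarrow> ('f,'c) gtrm list set"

text \<open>Mapping \<open>L(t) \<leadsto> V(z)\<close>.\<close>
type_synonym ('p,'f,'x,'c,'d) mapping = "'p \<times> ('f,'x) trm list \<times> ('f,'c,'d) view \<times> 'x list"

definition obda_spec :: "('a,'r) tbox \<Rightarrow> (('a,'r) pred,'f,'x,'c,'d) mapping set \<Rightarrow> bool" where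
  "obda_spec T M \<longleftrightarrow> finite T \<and> finite M \<and>
     (\<forall>(L,t,V,z)\<in>M. length t = arity L \<and> set (vars_l t) \<subseteq> set z)"

definition vabox :: "('p,'f,'x,'c,'d) mapping set \<Rightarrow> 'd \<Rightarrow> ('p \<times> ('f,'c) gtrm list) set" where
  "vabox M D = {(L, map (inst \<nu>) t) | L t V z \<nu>. (L,t,V,z) \<in> M \<and> map \<nu> z \<in> V D}"

text \<open>Datalog rule \<open>H(h) \<leftarrow> V\<^sub>1(t\<^sub>1),\<dots>,V\<^sub>n(t\<^sub>n)\<close> over views (non-recursive by construction);
  a Datalog query is a set of rules for its answer predicate.\<close>
type_synonym ('f,'y,'c,'d) rule = "('f,'y) trm list \<times> (('f,'c,'d) view \<times> ('f,'y) trm list) list"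

definition dl_eval :: "('f,'y,'c,'d) rule set \<Rightarrow> 'd \<Rightarrow> ('f,'c) gtrm list set" where
  "dl_eval Pi D = {map (inst \<nu>) h | h B \<nu>. (h,B) \<in> Pi \<and> (\<forall>(V,ts)\<in>set B. map (inst \<nu>) ts \<in> V D)}"

text \<open>Unfolding. Mapping variables of the i-th atom are renamed apart as \<open>Inr (i,z)\<close>.\<close>
definition unf :: "('p,'v) cq \<Rightarrow> ('p,'f,'x,'c,'d) mapping set \<Rightarrow> ('f,'v + nat \<times> 'x,'c,'d) rule set" where
  "unf q M = {(map (\<sigma> \<circ> Inl) (fst q),
               map (\<lambda>i. (fst (snd (snd (ms!i))), map (\<lambda>z. \<sigma> (Inr (i,z))) (snd (snd (snd (ms!i))))))
                   [0..<length (snd q)]) | ms \<sigma>.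
       length ms = length (snd q) \<and> set ms \<subseteq> M \<and>
       (\<forall>i<length (snd q). fst (ms!i) = fst (snd q ! i) \<and>
                           length (fst (snd (ms!i))) = length (snd (snd q ! i))) \<and>
       is_mgu \<sigma> {(Var (Inl v), subst (\<lambda>z. Var (Inr (i,z))) t) | i v t.
                    i < length (snd q) \<and> (v,t) \<in> set (zip (snd (snd q ! i)) (fst (snd (ms!i))))}}"

definition unf_ucq :: "('p,'v) ucq \<Rightarrow> ('p,'f,'x,'c,'d) mapping set \<Rightarrow> ('f,'v + nat \<times> 'x,'c,'d) rule set" where
  "unf_ucq Q M = (\<Union>q\<in>set Q. unf q M)"

text \<open>A mapping \<open>L(xs) \<leadsto> U(xs)\<close> whose view \<open>U\<close> is given by a Datalog query (set of rules).\<close>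
type_synonym ('p,'f,'y,'c,'d) dl_mapping = "'p \<times> 'y list \<times> ('f,'y,'c,'d) rule set"
type_synonym ('p,'f,'y,'c,'d) cq_mapping = "'p \<times> ('f,'y,'c,'d) rule"

definition split :: "('p,'f,'y,'c,'d) dl_mapping \<Rightarrow> ('p,'f,'y,'c,'d) cq_mapping set" where
  "split m = {(fst m, r) | r. r \<in> snd (snd m)}"

text \<open>Wrap: for each signature (predicate, skeleton of head terms) one mapping
  \<open>L(f(v)) \<leadsto> W(v)\<close> with fresh distinct variables \<open>v\<close> and fresh view \<open>W\<close> defined by the
  rules \<open>W(v\<^sub>i) \<leftarrow> B\<^sub>i\<close> for the mappings \<open>L(f(v\<^sub>i)) \<leadsto> B\<^sub>i\<close> of that signature.\<close>
definition wrap :: "('p,'f,'y,'c,'d) cq_mapping set \<Rightarrow> ('p,'f,nat,'c,'d) mapping set" where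
  "wrap G = {(L, fst (nums 0 sk),
              (\<lambda>D. dl_eval {(map Var (vars_l h), B) | h B. (L,(h,B)) \<in> G \<and> skel h = sk} D),
              [0..<snd (nums 0 sk)]) | L sk. \<exists>h B. (L,(h,B)) \<in> G \<and> skel h = sk}"

text \<open>The fresh predicates
  \<open>Aux\<^sub>f\<close> are the fragments \<open>f\<close> themselves; \<open>M\<^sup>a\<^sup>u\<^sup>x\<close> consists of \<open>Aux\<^sub>f(xf f) \<leadsto> U\<^sub>f(xf f)\<close>
  with \<open>U\<^sub>f\<close> the view for \<open>unf(R f, M)\<close>.\<close>
definition M_aux :: "'fr set \<Rightarrow> ('fr \<Rightarrow> 'v list) \<Rightarrow> ('fr \<Rightarrow> ('p,'v) ucq)
                     \<Rightarrow> ('p,'f,'x,'c,'d) mapping set \<Rightarrow> ('fr,'f,'v + nat \<times> 'x,'c,'d) dl_mapping set" where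
  "M_aux C xf R M = {(f, map Inl (xf f), unf_ucq (R f) M) | f. f \<in> C}"

definition q_aux :: "'v list \<Rightarrow> 'fr set \<Rightarrow> ('fr \<Rightarrow> 'v list) \<Rightarrow> ('fr,'v) cq" where
  "q_aux xs C xf = (xs, map (\<lambda>f. (f, xf f)) (SOME l. set l = C \<and> distinct l))"

definition unf_opt :: "'v list \<Rightarrow> 'fr set \<Rightarrow> ('fr \<Rightarrow> 'v list) \<Rightarrow> ('fr \<Rightarrow> ('p,'v) ucq)
                       \<Rightarrow> ('p,'f,'x,'c,'d) mapping set \<Rightarrow> ('f,'v + nat \<times> nat,'c,'d) rule set" where
  "unf_opt xs C xf R M = unf (q_aux xs C xf) (wrap (\<Union>m\<in>M_aux C xf R M. split m))"

end

theory Submission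
  imports Defs
begin

lemma subst_subst: "subst \<rho> (subst \<sigma> t) = subst (\<lambda>x. subst \<rho> (\<sigma> x)) t"
  by (induction t) auto

lemma inst_subst: "inst \<eta> (subst \<sigma> t) = inst (\<lambda>x. inst \<eta> (\<sigma> x)) t"
  by (induction t) auto

lemma subst_cong: "(\<And>y. y \<in> set (vars_t t) \<Longrightarrow> \<sigma> y = \<sigma>' y) \<Longrightarrow> subst \<sigma> t = subst \<sigma>' t"
  by (induction t) auto

lemma inst_cong: "(\<And>y. y \<in> set (vars_t t) \<Longrightarrow> \<sigma> y = \<sigma>' y) \<Longrightarrow> inst \<sigma> t = inst \<sigma>' t"
  by (induction t) auto

lemma vars_subst: "set (vars_t (subst \<sigma> t)) = (\<Union>y\<in>set (vars_t t). set (vars_t (\<sigma> y)))"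
  by (induction t) auto

fun tsize :: "('f,'v) trm \<Rightarrow> nat" where
  "tsize (Var x) = 1"
| "tsize (Fun f ts) = Suc (sum_list (map tsize ts))"

fun gsize :: "('f,'c) gtrm \<Rightarrow> nat" where
  "gsize (GC x) = 1"
| "gsize (GF f ts) = Suc (sum_list (map gsize ts))"

lemma occurs_size:
  "x \<in> set (vars_t t) \<Longrightarrow> gsize (\<eta> x) \<le> gsize (inst \<eta> t) \<and> (t \<noteq> Var x \<longrightarrow> gsize (\<eta> x) < gsize (inst \<eta> t))"
proof (induction t)
  case (Var y)
  then show ?case by auto
next
  case (Fun f ts)
  then obtain u where u: "u \<in> set ts" "x \<in> set (vars_t u)" by auto
  with Fun have "gsize (\<eta> x) \<le> gsize (inst \<eta> u)" by auto
  also have "\<dots> \<le> sum_list (map gsize (map (inst \<eta>) ts))"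
    using u(1) by (intro member_le_sum_list) auto
  finally show ?case by auto
qed

definition gunif :: "('v \<Rightarrow> ('f,'c) gtrm) \<Rightarrow> (('f,'v) trm \<times> ('f,'v) trm) list \<Rightarrow> bool" where
  "gunif \<eta> E \<longleftrightarrow> (\<forall>(s,t)\<in>set E. inst \<eta> s = inst \<eta> t)"

definition varsE :: "(('f,'v) trm \<times> ('f,'v) trm) list \<Rightarrow> 'v set" where
  "varsE E = (\<Union>(s,t)\<in>set E. set (vars_t s) \<union> set (vars_t t))"

definition sizeE :: "(('f,'v) trm \<times> ('f,'v) trm) list \<Rightarrow> nat" where
  "sizeE E = sum_list (map (\<lambda>(s,t). tsize s + tsize t) E)"

lemma finite_varsE: "finite (varsE E)"
  unfolding varsE_def by auto

definition good_unif :: "('v \<Rightarrow> ('f,'v) trm) \<Rightarrow> (('f,'v) trm \<times> ('f,'v) trm) list \<Rightarrow> ('c itself) \<Rightarrow> bool" where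
  "good_unif \<sigma> E _ \<longleftrightarrow> unifier \<sigma> (set E) \<and>
     (\<forall>\<tau>. unifier \<tau> (set E) \<longrightarrow> (\<exists>\<rho>. \<forall>x. \<tau> x = subst \<rho> (\<sigma> x))) \<and>
     (\<forall>\<eta> :: 'v \<Rightarrow> ('f,'c) gtrm. gunif \<eta> E \<longrightarrow> (\<exists>\<eta>'. \<forall>x. \<eta> x = inst \<eta>' (\<sigma> x)))"

lemma map_eq_zip:
  "length xs = length ys \<Longrightarrow> (map g xs = map g ys) = (\<forall>(a,b)\<in>set (zip xs ys). g a = g b)"
proof (induction xs arbitrary: ys)
  case Nil then show ?case by simp
next
  case (Cons a xs ys)
  then obtain b ys' where "ys = b # ys'" by (cases ys) auto
  with Cons show ?case by auto
qed

lemma map_eq_zipD: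
  "map f xs = map g ys \<Longrightarrow> (a,b)\<in>set (zip xs ys) \<Longrightarrow> f a = g b"
  by (induction xs arbitrary: ys) (auto simp: Cons_eq_map_conv)

lemma sizeE_zip:
  "sizeE (zip xs ys) \<le> sum_list (map tsize xs) + sum_list (map tsize ys)"
  unfolding sizeE_def
proof (induction xs arbitrary: ys)
  case Nil then show ?case by simp
next
  case (Cons a xs ys)
  then show ?case
  proof (cases ys)
    case Nil then show ?thesis by simp
  next
    case (Cons b ys')
    with Cons.IH[of ys'] show ?thesis by simp
  qed
qed

lemma sizeE_append: "sizeE (A @ B) = sizeE A + sizeE B"
  unfolding sizeE_def by simp

lemma sizeE_Cons: "sizeE ((s,t) # B) = tsize s + tsize t + sizeE B"
  unfolding sizeE_def by simp

lemma unifier_Cons: "unifier \<sigma> (set ((s,t) # E)) \<longleftrightarrow> subst \<sigma> s = subst \<sigma> t \<and> unifier \<sigma> (set E)"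
  unfolding unifier_def by auto

lemma gunif_Cons: "gunif \<eta> ((s,t) # E) \<longleftrightarrow> inst \<eta> s = inst \<eta> t \<and> gunif \<eta> E"
  unfolding gunif_def by auto

lemma unifier_append: "unifier \<sigma> (set (A @ B)) \<longleftrightarrow> unifier \<sigma> (set A) \<and> unifier \<sigma> (set B)"
  unfolding unifier_def by auto

lemma gunif_append: "gunif \<sigma> (A @ B) \<longleftrightarrow> gunif \<sigma> A \<and> gunif \<sigma> B"
  unfolding gunif_def by auto

lemma unifier_insert: "unifier \<sigma> (insert (s,t) E) \<longleftrightarrow> subst \<sigma> s = subst \<sigma> t \<and> unifier \<sigma> E"
  unfolding unifier_def by auto

lemma unifier_Un: "unifier \<sigma> (A \<union> B) \<longleftrightarrow> unifier \<sigma> A \<and> unifier \<sigma> B"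
  unfolding unifier_def by auto

lemma tsize_pos: "tsize t > 0"
  by (cases t) auto

lemma subst_Var: "subst Var t = t"
  by (induction t) (auto simp: map_idI)

lemma good_unif_swap: "good_unif \<sigma> ((s,t)#E) c \<longleftrightarrow> good_unif \<sigma> ((t,s)#E) c"
proof -
  have a: "unifier \<tau> (set ((s,t)#E)) = unifier \<tau> (set ((t,s)#E))" for \<tau>
    by (auto simp: unifier_def)
  have b: "gunif \<eta> ((s,t)#E) = gunif \<eta> ((t,s)#E)" for \<eta>
    by (auto simp: gunif_def)
  show ?thesis unfolding good_unif_def a b ..
qed

lemma gunif_swap: "gunif \<eta> ((s,t)#E) \<longleftrightarrow> gunif \<eta> ((t,s)#E)"
  by (auto simp: gunif_def)

lemma elim_step:
  fixes x :: 'v and u :: "('f,'v) trm"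
  assumes xu: "x \<notin> set (vars_t u)"
    and IHr: "good_unif \<sigma>'' (map (\<lambda>(a,b). (subst (Var(x:=u)) a, subst (Var(x:=u)) b)) E') (TYPE('c))"
  shows "good_unif (\<lambda>y. subst \<sigma>'' ((Var(x:=u)) y)) ((Var x, u) # E') (TYPE('c))"
proof -
  define sx where "sx = Var(x:=u)"
  define \<sigma> where "\<sigma> = (\<lambda>y. subst \<sigma>'' (sx y))"
  have su: "subst sx u = u"
  proof -
    have "subst sx u = subst Var u" by (rule subst_cong) (use xu in \<open>auto simp: sx_def\<close>)
    then show ?thesis by (simp add: subst_Var)
  qed
  have s\<sigma>: "subst \<sigma> a = subst \<sigma>'' (subst sx a)" for a
    by (simp add: \<sigma>_def subst_subst)
  have IH: "good_unif \<sigma>'' (map (\<lambda>(a,b). (subst sx a, subst sx b)) E') (TYPE('c))"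
    using IHr by (simp add: sx_def)
  have U1: "unifier \<sigma> (set ((Var x, u) # E'))"
  proof -
    have "subst \<sigma> (Var x) = subst \<sigma> u"
      using s\<sigma>[of u] su by (simp add: \<sigma>_def sx_def)
    moreover have "unifier \<sigma> (set E')"
      using IH unfolding good_unif_def unifier_def by (force simp: s\<sigma>)
    ultimately show ?thesis unfolding unifier_def by auto
  qed
  have U2: "\<exists>\<rho>. \<forall>x. \<tau> x = subst \<rho> (\<sigma> x)" if "unifier \<tau> (set ((Var x, u) # E'))" for \<tau>
  proof -
    from that have tx: "\<tau> x = subst \<tau> u" and tE: "unifier \<tau> (set E')" by (auto simp: unifier_insert)
    have fx: "(\<lambda>y. subst \<tau> (sx y)) = \<tau>" using tx by (auto simp: sx_def)
    have "unifier \<tau> (set (map (\<lambda>(a,b). (subst sx a, subst sx b)) E'))"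
      using tE unfolding unifier_def by (auto simp: subst_subst fx)
    with IH obtain \<rho> where r: "\<forall>z. \<tau> z = subst \<rho> (\<sigma>'' z)" unfolding good_unif_def by blast
    hence teq: "\<tau> = (\<lambda>z. subst \<rho> (\<sigma>'' z))" by auto
    have "\<tau> y = subst \<rho> (\<sigma> y)" for y
    proof -
      have "\<tau> y = subst \<tau> (sx y)" using fx by metis
      also have "\<dots> = subst (\<lambda>z. subst \<rho> (\<sigma>'' z)) (sx y)" using teq by simp
      also have "\<dots> = subst \<rho> (\<sigma> y)" by (simp add: \<sigma>_def subst_subst)
      finally show ?thesis .
    qed
    then show ?thesis by blast
  qed
  have U3: "\<exists>\<eta>'. \<forall>x. \<eta> x = inst \<eta>' (\<sigma> x)" if "gunif (\<eta> :: 'v \<Rightarrow> ('f,'c) gtrm) ((Var x, u) # E')" for \<eta>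
  proof -
    from that have tx: "\<eta> x = inst \<eta> u" and tE: "gunif \<eta> E'" by (auto simp: gunif_Cons)
    have fx: "(\<lambda>y. inst \<eta> (sx y)) = \<eta>" using tx by (auto simp: sx_def)
    have "gunif \<eta> (map (\<lambda>(a,b). (subst sx a, subst sx b)) E')"
      using tE unfolding gunif_def by (auto simp: inst_subst fx)
    with IH obtain \<rho> where r: "\<forall>z. \<eta> z = inst \<rho> (\<sigma>'' z)" unfolding good_unif_def by blast
    hence teq: "\<eta> = (\<lambda>z. inst \<rho> (\<sigma>'' z))" by auto
    have "\<eta> y = inst \<rho> (\<sigma> y)" for y
    proof -
      have "\<eta> y = inst \<eta> (sx y)" using fx by metis
      also have "\<dots> = inst (\<lambda>z. inst \<rho> (\<sigma>'' z)) (sx y)" using teq by simp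
      also have "\<dots> = inst \<rho> (\<sigma> y)" by (simp add: \<sigma>_def inst_subst)
      finally show ?thesis .
    qed
    then show ?thesis by blast
  qed
  have "good_unif \<sigma> ((Var x, u) # E') (TYPE('c))"
    unfolding good_unif_def using U1 U2 U3 by blast
  then show ?thesis by (simp add: \<sigma>_def sx_def)
qed

lemma good_unif_triv: "good_unif \<sigma> E c \<Longrightarrow> good_unif \<sigma> ((a,a)#E) c"
proof -
  have x: "unifier \<tau> (set ((a,a)#E)) = unifier \<tau> (set E)" for \<tau>
    by (auto simp: unifier_def)
  have y: "gunif \<eta> ((a,a)#E) = gunif \<eta> E" for \<eta>
    by (auto simp: gunif_def)
  show "good_unif \<sigma> E c \<Longrightarrow> good_unif \<sigma> ((a,a)#E) c" unfolding good_unif_def x y .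
qed

lemma zip_unif: "length ss = length us \<Longrightarrow>
   subst \<sigma> (Fun f ss) = subst \<sigma> (Fun f us) \<longleftrightarrow> unifier \<sigma> (set (zip ss us))"
  unfolding unifier_def by (simp add: map_eq_zip)

lemma zip_gunif: "length ss = length us \<Longrightarrow>
   inst \<eta> (Fun f ss) = inst \<eta> (Fun f us) \<longleftrightarrow> gunif \<eta> (zip ss us)"
  unfolding gunif_def by (simp add: map_eq_zip)

lemma decomp_step:
  assumes "length ss = length us" and "good_unif \<sigma> (zip ss us @ E') c"
  shows "good_unif \<sigma> ((Fun f ss, Fun f us) # E') c"
proof -
  have a: "unifier \<tau> (set ((Fun f ss, Fun f us) # E')) \<longleftrightarrow> unifier \<tau> (set (zip ss us @ E'))" for \<tau>
    using zip_unif[OF assms(1), of \<tau> f] by (simp add: unifier_insert unifier_Un)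
  have b: "gunif \<eta> ((Fun f ss, Fun f us) # E') \<longleftrightarrow> gunif \<eta> (zip ss us @ E')" for \<eta>
    using zip_gunif[OF assms(1), of \<eta> f] by (simp add: gunif_Cons gunif_append)
  show ?thesis using assms(2) unfolding good_unif_def a b .
qed

lemma unify_exists:
  fixes \<eta> :: "'v \<Rightarrow> ('f,'c) gtrm" and E :: "(('f,'v) trm \<times> ('f,'v) trm) list"
  shows "gunif \<eta> E \<Longrightarrow> \<exists>\<sigma>. good_unif \<sigma> E (TYPE('c))"
proof (induction E arbitrary: \<eta> rule: wf_induct[OF wf_measures[of "[\<lambda>E. card (varsE E), sizeE]"]])
  case (1 E)
  note IH = "1.IH"
  show ?case
  proof (cases E)
    case Nil
    have "good_unif Var E (TYPE('c))"
      unfolding good_unif_def Nil unifier_def subst.simps inst.simps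
      by (simp add: fun_eq_iff[symmetric])
    then show ?thesis by blast
  next
    case (Cons p E')
    obtain s t where p: "p = (s,t)" by (cases p)
    have gE: "gunif \<eta> ((s,t) # E')" using "1.prems" Cons p by simp
    have vE': "varsE E' \<subseteq> varsE E" using Cons by (auto simp: varsE_def)
    show ?thesis
    proof (cases "\<exists>x u. (s = Var x \<and> t = u) \<or> (s = u \<and> t = Var x)")
      case True
      then obtain x u where xu: "(s = Var x \<and> t = u) \<or> (s = u \<and> t = Var x)" by blast
      have swap: "good_unif \<sigma> ((Var x, u) # E') (TYPE('c)) \<Longrightarrow> good_unif \<sigma> E (TYPE('c))" for \<sigma>
        using xu good_unif_swap[of \<sigma> u "Var x" E' "TYPE('c)"] Cons p by auto
      have g2: "gunif \<eta> ((Var x, u) # E')" using xu gE gunif_swap[of \<eta> u "Var x" E'] by auto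
      hence etax: "\<eta> x = inst \<eta> u" and gE': "gunif \<eta> E'" by (auto simp: gunif_Cons)
      have vu: "set (vars_t u) \<subseteq> varsE E" and xE: "x \<in> varsE E"
        using xu Cons p by (auto simp: varsE_def)
      show ?thesis
      proof (cases "u = Var x")
        case True
        have "sizeE E' < sizeE E" using Cons p tsize_pos[of s] by (simp add: sizeE_Cons)
        moreover have "card (varsE E') \<le> card (varsE E)" using vE' finite_varsE card_mono by blast
        ultimately have "(E', E) \<in> measures [\<lambda>E. card (varsE E), sizeE]" by auto
        with IH gE' obtain \<sigma> where "good_unif \<sigma> E' (TYPE('c))" by blast
        hence "good_unif \<sigma> ((Var x, u) # E') (TYPE('c))"
          using True good_unif_triv by metis
        then show ?thesis using swap by blast
      next
        case False
        show ?thesis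
        proof (cases "x \<in> set (vars_t u)")
          case True
          from occurs_size[OF True, of \<eta>] False etax show ?thesis by simp
        next
          case xnu: False
          define E'' where "E'' = map (\<lambda>(a,b). (subst (Var(x:=u)) a, subst (Var(x:=u)) b)) E'"
          have vsub: "set (vars_t (subst (Var(x:=u)) a)) \<subseteq> (set (vars_t a) - {x}) \<union> set (vars_t u)" for a
            by (auto simp: vars_subst split: if_splits)
          have sub: "varsE E'' \<subseteq> varsE E - {x}"
          proof
            fix y assume "y \<in> varsE E''"
            then obtain a b where ab: "(a,b) \<in> set E'"
              "y \<in> set (vars_t (subst (Var(x:=u)) a)) \<or> y \<in> set (vars_t (subst (Var(x:=u)) b))"
              unfolding E''_def varsE_def by auto
            then have "y \<in> (set (vars_t a) - {x}) \<union> set (vars_t u) \<or> y \<in> (set (vars_t b) - {x}) \<union> set (vars_t u)"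
              using vsub by blast
            moreover have "set (vars_t a) \<union> set (vars_t b) \<subseteq> varsE E" using ab(1) vE' by (auto simp: varsE_def)
            ultimately show "y \<in> varsE E - {x}" using vu xnu by auto
          qed
          have "card (varsE E'') \<le> card (varsE E - {x})"
            by (rule card_mono[OF _ sub]) (simp add: finite_varsE)
          also have "\<dots> < card (varsE E)" by (rule card_Diff1_less[OF finite_varsE xE])
          finally have "(E'', E) \<in> measures [\<lambda>E. card (varsE E), sizeE]" by simp
          moreover have "gunif \<eta> E''"
          proof -
            have fx: "(\<lambda>y. inst \<eta> (if y = x then u else Var y)) = \<eta>" using etax by auto
            show ?thesis using gE' unfolding gunif_def E''_def by (auto simp: inst_subst fx)
          qed
          ultimately obtain \<sigma>'' where "good_unif \<sigma>'' E'' (TYPE('c))" using IH by blast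
          from elim_step[OF xnu this[unfolded E''_def]] swap show ?thesis by blast
        qed
      qed
    next
      case False
      then obtain f ss g us where st: "s = Fun f ss" "t = Fun g us"
        by (cases s; cases t) auto
      from gE st have "f = g" and m: "map (inst \<eta>) ss = map (inst \<eta>) us" by (auto simp: gunif_Cons)
      hence len: "length ss = length us" by (metis length_map)
      define E'' where "E'' = zip ss us @ E'"
      have "gunif \<eta> (zip ss us)" using m len by (simp add: gunif_def map_eq_zip)
      moreover have "gunif \<eta> E'" using gE by (simp add: gunif_Cons)
      ultimately have "gunif \<eta> E''" unfolding E''_def by (simp add: gunif_append)
      moreover have "(E'', E) \<in> measures [\<lambda>E. card (varsE E), sizeE]"
      proof -
        have "varsE E'' \<subseteq> varsE E" using Cons p st
          by (auto simp: varsE_def E''_def dest: set_zip_leftD set_zip_rightD)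
        hence "card (varsE E'') \<le> card (varsE E)" using finite_varsE card_mono by blast
        moreover have "sizeE E'' < sizeE E"
          using sizeE_zip[of ss us] Cons p st by (simp add: E''_def sizeE_append sizeE_Cons)
        ultimately show ?thesis by auto
      qed
      ultimately obtain \<sigma> where "good_unif \<sigma> E'' (TYPE('c))" using IH by blast
      from decomp_step[OF len this[unfolded E''_def]] show ?thesis
        using Cons p st \<open>f = g\<close> by blast
    qed
  qed
qed

lemma vaboxI: "(L,t,V,z) \<in> M \<Longrightarrow> map \<nu> z \<in> V D \<Longrightarrow> (L, map (inst \<nu>) t) \<in> vabox M D"
  unfolding vabox_def by blast

lemma cq_evalI: "(\<And>p vs. (p,vs)\<in>set (snd q) \<Longrightarrow> (p, map \<nu> vs) \<in> A) \<Longrightarrow> map \<nu> (fst q) \<in> cq_eval q A"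
  unfolding cq_eval_def by blast

lemma unf_sound:
  fixes q :: "('p,'v) cq" and M :: "('p,'f,'x,'c,'d) mapping set"
  assumes "a \<in> dl_eval (unf q M) D"
  shows "a \<in> cq_eval q (vabox M D)"
proof -
  let ?n = "length (snd q)"
  from assms obtain h B \<eta> where hB: "(h,B) \<in> unf q M"
    and body: "\<forall>(V,ts)\<in>set B. map (inst \<eta>) ts \<in> V D" and a: "a = map (inst \<eta>) h"
    unfolding dl_eval_def by blast
  from hB obtain ms \<sigma> where h: "h = map (\<sigma> \<circ> Inl) (fst q)"
    and B: "B = map (\<lambda>i. (fst (snd (snd (ms!i))), map (\<lambda>z. \<sigma> (Inr (i,z))) (snd (snd (snd (ms!i))))))
                   [0..<?n]"
    and len: "length ms = ?n" and msM: "set ms \<subseteq> M"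
    and cond: "\<forall>i<?n. fst (ms!i) = fst (snd q ! i) \<and>
                           length (fst (snd (ms!i))) = length (snd (snd q ! i))"
    and mgu: "is_mgu \<sigma> {(Var (Inl v), subst (\<lambda>z. Var (Inr (i,z))) t) | i v t.
                    i < ?n \<and> (v,t) \<in> set (zip (snd (snd q ! i)) (fst (snd (ms!i))))}"
    unfolding unf_def by blast
  define Es :: "(('f, 'v + nat \<times> 'x) trm \<times> ('f, 'v + nat \<times> 'x) trm) set" where "Es = {(Var (Inl v), subst (\<lambda>z. Var (Inr (i,z))) t) | i v t.
                    i < ?n \<and> (v,t) \<in> set (zip (snd (snd q ! i)) (fst (snd (ms!i))))}"
  have U: "subst \<sigma> s = subst \<sigma> t" if "(s,t) \<in> Es" for s t
  proof -
    have "unifier \<sigma> Es" using mgu unfolding is_mgu_def Es_def by (rule conjunct1)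
    then show ?thesis using that unfolding unifier_def by auto
  qed
  define \<nu> where "\<nu> = (\<lambda>v. inst \<eta> (\<sigma> (Inl v)))"
  have aeq: "a = map \<nu> (fst q)" using a h by (simp add: \<nu>_def)
  have "(p, map \<nu> vs) \<in> vabox M D" if pv: "(p,vs) \<in> set (snd q)" for p vs
  proof -
    from pv obtain i where i: "i < ?n" "snd q ! i = (p,vs)" by (auto simp: in_set_conv_nth)
    obtain L t V z where m: "ms!i = (L,t,V,z)" by (cases "ms!i") auto
    have mM: "(L,t,V,z) \<in> M" using msM len i(1) m by (metis nth_mem subsetD)
    have L: "L = p" and lt: "length t = length vs" using cond i m by auto
    define \<mu> where "\<mu> = (\<lambda>y. inst \<eta> (\<sigma> (Inr (i,y))))"
    have "(V, map (\<lambda>y. \<sigma> (Inr (i,y))) z) \<in> set B" using B i(1) m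
      by (auto simp: image_iff intro!: bexI[of _ i])
    with body have "map (inst \<eta>) (map (\<lambda>y. \<sigma> (Inr (i,y))) z) \<in> V D" by fastforce
    hence zin: "map \<mu> z \<in> V D" by (simp add: \<mu>_def comp_def)
    have "map \<nu> vs = map (inst \<mu>) t"
    proof (rule nth_equalityI)
      show "length (map \<nu> vs) = length (map (inst \<mu>) t)" using lt by simp
      fix j assume j: "j < length (map \<nu> vs)"
      have "(vs!j, t!j) \<in> set (zip vs t)" using j lt by (auto simp: in_set_zip)
      hence "(Var (Inl (vs!j)), subst (\<lambda>z. Var (Inr (i,z))) (t!j)) \<in> Es"
        unfolding Es_def using i m by fastforce
      hence "subst \<sigma> (Var (Inl (vs!j))) = subst \<sigma> (subst (\<lambda>z. Var (Inr (i,z))) (t!j))"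
        by (rule U)
      hence "\<sigma> (Inl (vs!j)) = subst (\<lambda>z. \<sigma> (Inr (i,z))) (t!j)" by (simp add: subst_subst)
      hence "\<nu> (vs!j) = inst \<mu> (t!j)" by (simp add: \<nu>_def \<mu>_def inst_subst)
      then show "map \<nu> vs ! j = map (inst \<mu>) t ! j" using j lt by simp
    qed
    note eq = this
    have "(L, map (inst \<mu>) t) \<in> vabox M D" by (rule vaboxI[OF mM zin])
    then show ?thesis unfolding eq L .
  qed
  then show ?thesis unfolding aeq by (rule cq_evalI)
qed


lemma dl_evalI: "(h,B) \<in> Pi \<Longrightarrow> (\<And>V ts. (V,ts)\<in>set B \<Longrightarrow> map (inst \<eta>) ts \<in> V D) \<Longrightarrow> map (inst \<eta>) h \<in> dl_eval Pi D"
  unfolding dl_eval_def by blast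

lemma unf_complete:
  fixes q :: "('p,'v) cq" and M :: "('p,'f,'x,'c,'d) mapping set"
  assumes "a \<in> cq_eval q (vabox M D)"
  shows "a \<in> dl_eval (unf q M) D"
proof -
  let ?n = "length (snd q)"
  from assms obtain \<nu> where a: "a = map \<nu> (fst q)"
    and at: "\<forall>(p,vs)\<in>set (snd q). (p, map \<nu> vs) \<in> vabox M D"
    unfolding cq_eval_def by blast
  let ?P = "\<lambda>i m \<mu>. i < ?n \<longrightarrow> (m \<in> M \<and> fst m = fst (snd q ! i) \<and>
       map \<nu> (snd (snd q ! i)) = map (inst \<mu>) (fst (snd m)) \<and>
       map \<mu> (snd (snd (snd m))) \<in> fst (snd (snd m)) D)"
  have "\<forall>i. \<exists>m. \<exists>\<mu>. ?P i m \<mu>"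
  proof
    fix i show "\<exists>m \<mu>. ?P i m \<mu>"
    proof (cases "i < ?n")
      case True
      obtain p vs where pv: "snd q ! i = (p,vs)" by (cases "snd q ! i")
      have "(p,vs) \<in> set (snd q)" using True pv nth_mem by metis
      with at have "(p, map \<nu> vs) \<in> vabox M D" by blast
      then obtain L t V z \<mu> where "(L,t,V,z) \<in> M" "map \<mu> z \<in> V D" "(p, map \<nu> vs) = (L, map (inst \<mu>) t)"
        unfolding vabox_def by blast
      then have "?P i (L,t,V,z) \<mu>" using pv by auto
      then show ?thesis by blast
    qed simp
  qed
  hence "\<exists>mf. \<forall>i. \<exists>\<mu>. ?P i (mf i) \<mu>" by (rule choice)
  then obtain mf where "\<forall>i. \<exists>\<mu>. ?P i (mf i) \<mu>" by blast
  hence "\<exists>\<mu>f. \<forall>i. ?P i (mf i) (\<mu>f i)" by (rule choice)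
  then obtain \<mu>f where P: "\<And>i. ?P i (mf i) (\<mu>f i)" by blast
  define ms where "ms = map mf [0..<?n]"
  have msi: "ms ! i = mf i" if "i < ?n" for i using that by (simp add: ms_def)
  define \<eta> :: "'v + nat \<times> 'x \<Rightarrow> ('f,'c) gtrm" where
    "\<eta> = (\<lambda>w. case w of Inl v \<Rightarrow> \<nu> v | Inr (i,z) \<Rightarrow> \<mu>f i z)"
  define El :: "(('f, 'v + nat \<times> 'x) trm \<times> ('f, 'v + nat \<times> 'x) trm) list" where
    "El = concat (map (\<lambda>i. map (\<lambda>(v,t). (Var (Inl v), subst (\<lambda>z. Var (Inr (i,z))) t))
             (zip (snd (snd q ! i)) (fst (snd (ms!i))))) [0..<?n])"
  define Es :: "(('f, 'v + nat \<times> 'x) trm \<times> ('f, 'v + nat \<times> 'x) trm) set" where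
    "Es = {(Var (Inl v), subst (\<lambda>z. Var (Inr (i,z))) t) | i v t.
                    i < ?n \<and> (v,t) \<in> set (zip (snd (snd q ! i)) (fst (snd (ms!i))))}"
  have setEl: "set El = Es" unfolding El_def Es_def by (auto; blast)
  have gE: "gunif \<eta> El"
    unfolding gunif_def
  proof
    fix e assume "e \<in> set El"
    then obtain i v t where i: "i < ?n" and vt: "(v,t) \<in> set (zip (snd (snd q ! i)) (fst (snd (ms!i))))"
      and e: "e = (Var (Inl v), subst (\<lambda>z. Var (Inr (i,z))) t)"
      unfolding El_def by auto
    have "map \<nu> (snd (snd q ! i)) = map (inst (\<mu>f i)) (fst (snd (ms!i)))"
      using P[of i] i msi[OF i] by simp
    hence "\<nu> v = inst (\<mu>f i) t" using vt by (rule map_eq_zipD)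
    moreover have "inst \<eta> (subst (\<lambda>z. Var (Inr (i,z))) t) = inst (\<mu>f i) t"
      by (simp add: inst_subst \<eta>_def)
    ultimately show "case e of (s,t) \<Rightarrow> inst \<eta> s = inst \<eta> t" using e by (simp add: \<eta>_def)
  qed
  obtain \<sigma> where g: "good_unif \<sigma> El (TYPE('c))" using unify_exists[OF gE] by blast
  have mgu: "is_mgu \<sigma> Es" using g unfolding good_unif_def is_mgu_def setEl by blast
  obtain \<eta>' where \<eta>': "\<And>x. \<eta> x = inst \<eta>' (\<sigma> x)" using g gE unfolding good_unif_def by blast
  define h where "h = map (\<sigma> \<circ> Inl) (fst q)"
  define B where "B = map (\<lambda>i. (fst (snd (snd (ms!i))), map (\<lambda>z. \<sigma> (Inr (i,z))) (snd (snd (snd (ms!i))))))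
                   [0..<?n]"
  have cond: "\<forall>i<?n. fst (ms!i) = fst (snd q ! i) \<and>
                           length (fst (snd (ms!i))) = length (snd (snd q ! i))"
  proof (intro allI impI)
    fix i assume i: "i < ?n"
    from P[of i] i msi[OF i] show "fst (ms!i) = fst (snd q ! i) \<and>
                           length (fst (snd (ms!i))) = length (snd (snd q ! i))"
      by (metis length_map)
  qed
  have len: "length ms = ?n" by (simp add: ms_def)
  have msM: "set ms \<subseteq> M" using P by (auto simp: ms_def)
  have hB: "(h,B) \<in> unf q M"
    unfolding unf_def h_def B_def mem_Collect_eq
    apply (rule exI[of _ ms], rule exI[of _ \<sigma>])
    using len msM cond mgu unfolding Es_def by simp
  have "map (inst \<eta>') h \<in> dl_eval (unf q M) D"
  proof (rule dl_evalI[OF hB])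
    fix V ts assume "(V,ts) \<in> set B"
    then obtain i where i: "i < ?n" and V: "V = fst (snd (snd (ms!i)))"
      and ts: "ts = map (\<lambda>z. \<sigma> (Inr (i,z))) (snd (snd (snd (ms!i))))"
      unfolding B_def by auto
    have "map (inst \<eta>') ts = map (\<mu>f i) (snd (snd (snd (ms!i))))"
      unfolding ts by (simp add: \<eta>'[symmetric] \<eta>_def)
    then show "map (inst \<eta>') ts \<in> V D" using P[of i] i msi[OF i] V by simp
  qed
  moreover have "map (inst \<eta>') h = a"
    unfolding h_def a by (simp add: \<eta>'[symmetric] \<eta>_def)
  ultimately show ?thesis by simp
qed

lemma unf_correct: "dl_eval (unf q M) D = cq_eval q (vabox M D)"
  by (rule set_eqI) (meson unf_sound unf_complete)

definition numok :: "('f,'v) trm \<Rightarrow> 'c itself \<Rightarrow> bool" where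
  "numok t _ \<longleftrightarrow> (\<forall>k u m. num k (subst (\<lambda>_. Var ()) t) = (u,m) \<longrightarrow> m = k + length (vars_t t) \<and>
      (\<forall>(\<mu>::nat \<Rightarrow> ('f,'c) gtrm) \<nu>. (\<forall>i<length (vars_t t). \<mu> (k+i) = \<nu> (vars_t t ! i)) \<longrightarrow> inst \<mu> u = inst \<nu> t))"

lemma numokD:
  assumes "numok t (TYPE('c))" "num k (subst (\<lambda>_. Var ()) t) = (u,m)"
  shows "m = k + length (vars_t t)"
    and "(\<And>i. i<length (vars_t t) \<Longrightarrow> (\<mu>::nat \<Rightarrow> ('f,'c) gtrm) (k+i) = \<nu> (vars_t t ! i)) \<Longrightarrow> inst \<mu> u = inst \<nu> t"
  using assms unfolding numok_def by blast+

lemma nums_skel_list: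
  fixes ts :: "('f,'v) trm list"
  assumes "\<forall>t\<in>set ts. numok t (TYPE('c))"
  shows "nums k (map (subst (\<lambda>_. Var ())) ts) = (us,m) \<Longrightarrow> m = k + length (vars_l ts) \<and>
      (\<forall>(\<mu>::nat \<Rightarrow> ('f,'c) gtrm) \<nu>. (\<forall>i<length (vars_l ts). \<mu> (k+i) = \<nu> (vars_l ts ! i)) \<longrightarrow> map (inst \<mu>) us = map (inst \<nu>) ts)"
  using assms
proof (induction ts arbitrary: k us m)
  case Nil
  then show ?case by (simp add: vars_l_def)
next
  case (Cons t ts)
  have eq0: "nums k (map (subst (\<lambda>_. Var ())) (t # ts)) = (us,m)" using Cons.prems by blast
  have all0: "\<forall>t\<in>set (t#ts). numok t (TYPE('c))" using Cons.prems by blast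
  have all1: "\<forall>t\<in>set ts. numok t (TYPE('c))" using all0 by simp
  have Ht: "numok t (TYPE('c))" using all0 by simp
  obtain u m1 where n1: "num k (subst (\<lambda>_. Var ()) t) = (u,m1)" by (cases "num k (subst (\<lambda>_. Var ()) t)")
  obtain us1 k2 where n2: "nums m1 (map (subst (\<lambda>_. Var ())) ts) = (us1,k2)"
    by (cases "nums m1 (map (subst (\<lambda>_. Var ())) ts)")
  from eq0 n1 n2 have us: "us = u # us1" and m: "m = k2" by auto
  note h1 = numokD(1)[OF Ht n1]
  note i1 = numokD(2)[OF Ht n1]
  from Cons.IH[OF n2 all1] have h2: "k2 = m1 + length (vars_l ts)"
    and i2: "\<And>(\<mu>::nat \<Rightarrow> ('f,'c) gtrm) \<nu>. (\<forall>i<length (vars_l ts). \<mu> (m1+i) = \<nu> (vars_l ts ! i)) \<Longrightarrow> map (inst \<mu>) us1 = map (inst \<nu>) ts"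
    by auto
  have vl: "vars_l (t # ts) = vars_t t @ vars_l ts" by (simp add: vars_l_def)
  show ?case
  proof
    show "m = k + length (vars_l (t # ts))" using m h1 h2 vl by simp
    show "\<forall>(\<mu>::nat \<Rightarrow> ('f,'c) gtrm) \<nu>. (\<forall>i<length (vars_l (t # ts)). \<mu> (k+i) = \<nu> (vars_l (t # ts) ! i)) \<longrightarrow>
           map (inst \<mu>) us = map (inst \<nu>) (t # ts)"
    proof (intro allI impI)
      fix \<mu> :: "nat \<Rightarrow> ('f,'c) gtrm" and \<nu>
      assume H: "\<forall>i<length (vars_l (t # ts)). \<mu> (k+i) = \<nu> (vars_l (t # ts) ! i)"
      have "inst \<mu> u = inst \<nu> t"
      proof (rule i1)
        fix i assume "i < length (vars_t t)"
        then show "\<mu> (k+i) = \<nu> (vars_t t ! i)" using H[rule_format, of i] vl by (simp add: nth_append)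
      qed
      moreover have "map (inst \<mu>) us1 = map (inst \<nu>) ts"
      proof (rule i2, intro allI impI)
        fix i assume "i < length (vars_l ts)"
        then show "\<mu> (m1+i) = \<nu> (vars_l ts ! i)" using H[rule_format, of "length (vars_t t) + i"] vl h1
          by (simp add: nth_append add.assoc)
      qed
      ultimately show "map (inst \<mu>) us = map (inst \<nu>) (t # ts)" using us by simp
    qed
  qed
qed

lemma num_skel: "numok (t::('f,'v) trm) (TYPE('c))"
proof (induction t)
  case (Var x)
  then show ?case unfolding numok_def by auto
next
  case (Fun f ts)
  have IH': "\<forall>t\<in>set ts. numok t (TYPE('c))" using Fun.IH by blast
  show ?case unfolding numok_def
  proof (intro allI impI)
    fix k u m assume a: "num k (subst (\<lambda>_. Var ()) (Fun f ts)) = (u, m)"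
    obtain us m' where n: "nums k (map (subst (\<lambda>_. Var ())) ts) = (us,m')"
      by (cases "nums k (map (subst (\<lambda>_. Var ())) ts)")
    with a have u: "u = Fun f us" and m: "m = m'" by auto
    have vt: "vars_t (Fun f ts) = vars_l ts" by (simp add: vars_l_def)
    from nums_skel_list[OF IH' n] show "m = k + length (vars_t (Fun f ts)) \<and>
      (\<forall>(\<mu>::nat \<Rightarrow> ('f,'c) gtrm) \<nu>. (\<forall>i<length (vars_t (Fun f ts)). \<mu> (k+i) = \<nu> (vars_t (Fun f ts) ! i)) \<longrightarrow> inst \<mu> u = inst \<nu> (Fun f ts))"
      unfolding vt u m by simp
  qed
qed

lemma nums_skel:
  fixes h :: "('f,'v) trm list"
  assumes "nums 0 (skel h) = (us, n)"
  shows "n = length (vars_l h)"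
    and "(\<And>i. i < length (vars_l h) \<Longrightarrow> (\<mu>::nat \<Rightarrow> ('f,'c) gtrm) i = \<nu> (vars_l h ! i)) \<Longrightarrow> map (inst \<mu>) us = map (inst \<nu>) h"
proof -
  have "\<forall>t\<in>set h. numok t (TYPE('c))" using num_skel by blast
  from nums_skel_list[OF this, of 0 us n] assms
  have A: "n = length (vars_l h)"
    and B: "\<And>(\<mu>::nat \<Rightarrow> ('f,'c) gtrm) \<nu>. (\<forall>i<length (vars_l h). \<mu> i = \<nu> (vars_l h ! i)) \<Longrightarrow> map (inst \<mu>) us = map (inst \<nu>) h"
    by (auto simp: skel_def)
  show "n = length (vars_l h)" by (rule A)
  show "(\<And>i. i < length (vars_l h) \<Longrightarrow> \<mu> i = \<nu> (vars_l h ! i)) \<Longrightarrow> map (inst \<mu>) us = map (inst \<nu>) h"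
    using B by blast
qed

lemma wrap_vabox:
  fixes G :: "('p,'f,'y,'c,'d) cq_mapping set"
  shows "vabox (wrap G) D = {(L, map (inst \<nu>) h) | L h B \<nu>. (L,(h,B)) \<in> G \<and> (\<forall>(V,ts)\<in>set B. map (inst \<nu>) ts \<in> V D)}"
proof (intro set_eqI iffI)
  fix e assume "e \<in> vabox (wrap G) D"
  then obtain L t W z \<mu> where m: "(L,t,W,z) \<in> wrap G" and zin: "map \<mu> z \<in> W D" and e: "e = (L, map (inst \<mu>) t)"
    unfolding vabox_def by blast
  from m obtain sk where t: "t = fst (nums 0 sk)"
    and W: "W = (\<lambda>D. dl_eval {(map Var (vars_l h), B) | h B. (L,(h,B)) \<in> G \<and> skel h = sk} D)"
    and z: "z = [0..<snd (nums 0 sk)]"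
    unfolding wrap_def by blast
  define n where "n = snd (nums 0 sk)"
  from zin obtain hh BB \<nu> where hB: "(hh,BB) \<in> {(map Var (vars_l h), B) | h B. (L,(h,B)) \<in> G \<and> skel h = sk}"
    and body: "\<forall>(V,ts)\<in>set BB. map (inst \<nu>) ts \<in> V D" and eqm: "map \<mu> [0..<n] = map (inst \<nu>) hh"
    unfolding W z dl_eval_def n_def by blast
  from hB obtain h' where hh: "hh = map Var (vars_l h')" and G: "(L,(h',BB)) \<in> G" and sk: "skel h' = sk"
    by blast
  have ns: "nums 0 (skel h') = (t, n)" using t n_def sk by simp
  note nl = nums_skel(1)[OF ns]
  have "map (inst \<mu>) t = map (inst \<nu>) h'"
  proof (rule nums_skel(2)[OF ns])
    fix i assume i: "i < length (vars_l h')"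
    have "map \<mu> [0..<n] ! i = map (inst \<nu>) hh ! i" using eqm by simp
    then show "\<mu> i = \<nu> (vars_l h' ! i)" using i nl hh by simp
  qed
  with e G body show "e \<in> {(L, map (inst \<nu>) h) | L h B \<nu>. (L,(h,B)) \<in> G \<and> (\<forall>(V,ts)\<in>set B. map (inst \<nu>) ts \<in> V D)}"
    by blast
next
  fix e assume "e \<in> {(L, map (inst \<nu>) h) | L h B \<nu>. (L,(h,B)) \<in> G \<and> (\<forall>(V,ts)\<in>set B. map (inst \<nu>) ts \<in> V D)}"
  then obtain L h B \<nu> where e: "e = (L, map (inst \<nu>) h)" and G: "(L,(h,B)) \<in> G"
    and body: "\<forall>(V,ts)\<in>set B. map (inst \<nu>) ts \<in> V D" by blast
  obtain us n where ns: "nums 0 (skel h) = (us, n)" by (cases "nums 0 (skel h)")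
  note nl = nums_skel(1)[OF ns]
  define \<mu> where "\<mu> = (\<lambda>i. \<nu> (vars_l h ! i))"
  define W where "W = (\<lambda>D. dl_eval {(map Var (vars_l h'), B') | h' B'. (L,(h',B')) \<in> G \<and> skel h' = skel h} D)"
  have m: "(L, us, W, [0..<n]) \<in> wrap G"
    unfolding wrap_def mem_Collect_eq W_def
    using ns G by (intro exI[of _ L] exI[of _ "skel h"]) auto
  have "map \<mu> [0..<n] = map (inst \<nu>) (map Var (vars_l h))"
    unfolding \<mu>_def nl by (rule nth_equalityI) auto
  moreover have "map (inst \<nu>) (map Var (vars_l h)) \<in> W D"
    unfolding W_def dl_eval_def using G body by blast
  ultimately have "map \<mu> [0..<n] \<in> W D" by simp
  from vaboxI[OF m this] have "(L, map (inst \<mu>) us) \<in> vabox (wrap G) D" .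
  moreover have "map (inst \<mu>) us = map (inst \<nu>) h"
    by (rule nums_skel(2)[OF ns]) (simp add: \<mu>_def)
  ultimately show "e \<in> vabox (wrap G) D" using e by simp
qed


lemma dl_eval_UN: "dl_eval (\<Union>x\<in>A. Pf x) D = (\<Union>x\<in>A. dl_eval (Pf x) D)"
  unfolding dl_eval_def by blast

lemma dl_eval_unf_ucq: "dl_eval (unf_ucq Q M) D = ucq_eval Q (vabox M D)"
  unfolding unf_ucq_def ucq_eval_def dl_eval_UN unf_correct ..

lemma G_mem: "(L,(h,B)) \<in> (\<Union>m\<in>M_aux C xf R M. split m) \<longleftrightarrow> L \<in> C \<and> (h,B) \<in> unf_ucq (R L) M"
  unfolding M_aux_def Defs.split_def by auto

lemma vabox_aux:
  "(f,a) \<in> vabox (wrap (\<Union>m\<in>M_aux C xf R M. split m)) D \<longleftrightarrow> f \<in> C \<and> a \<in> ucq_eval (R f) (vabox M D)"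
proof -
  have "(f,a) \<in> vabox (wrap (\<Union>m\<in>M_aux C xf R M. split m)) D \<longleftrightarrow>
     (\<exists>h B \<nu>. (f,(h,B)) \<in> (\<Union>m\<in>M_aux C xf R M. split m) \<and> (\<forall>(V,ts)\<in>set B. map (inst \<nu>) ts \<in> V D) \<and> a = map (inst \<nu>) h)"
    unfolding wrap_vabox by blast
  also have "\<dots> \<longleftrightarrow> f \<in> C \<and> (\<exists>h B \<nu>. (h,B) \<in> unf_ucq (R f) M \<and> (\<forall>(V,ts)\<in>set B. map (inst \<nu>) ts \<in> V D) \<and> a = map (inst \<nu>) h)"
    unfolding G_mem by blast
  also have "\<dots> \<longleftrightarrow> f \<in> C \<and> a \<in> dl_eval (unf_ucq (R f) M) D"
    unfolding dl_eval_def by blast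
  finally show ?thesis unfolding dl_eval_unf_ucq .
qed

theorem theorem4:
  fixes T :: "('a,'r) tbox"
    and M :: "(('a,'r) pred,'f,'x,'c,'d) mapping set"
    and q :: "(('a,'r) pred,'v) cq"
    and C :: "(('a,'r) pred \<times> 'v list) set set"
    and xf :: "(('a,'r) pred \<times> 'v list) set \<Rightarrow> 'v list"
    and R :: "(('a,'r) pred \<times> 'v list) set \<Rightarrow> (('a,'r) pred,'v) ucq"
    and D :: 'd
  assumes "obda_spec T M"
    and "wf_cq q"
    and "is_cover q C"
    and "\<forall>f\<in>C. frag_answer_vars q C f (xf f)"
    and "\<forall>f\<in>C. ucq_perfect_rewriting T (xf f) f (R f) (TYPE('f), TYPE('c))"
    and "jucq_perfect_rewriting T q C xf R (TYPE('f), TYPE('c))"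
  shows "dl_eval (unf_opt (fst q) C xf R M) D = jucq_eval (fst q) C xf R (vabox M D)"
proof -
  have "C \<subseteq> Pow (set (snd q))" using assms(3) unfolding is_cover_def by blast
  hence finC: "finite C" by (rule finite_subset) simp
  define l where "l = (SOME l. set l = C \<and> distinct l)"
  have "\<exists>l. set l = C \<and> distinct l" using finite_distinct_list[OF finC] .
  hence sl: "set l = C" unfolding l_def by (rule someI2_ex) blast
  define G where "G = (\<Union>m\<in>M_aux C xf R M. split m)"
  have qa: "q_aux (fst q) C xf = (fst q, map (\<lambda>f. (f, xf f)) l)" unfolding q_aux_def l_def ..
  have key: "(\<forall>(p,vs)\<in>set (snd (q_aux (fst q) C xf)). (p, map \<nu> vs) \<in> vabox (wrap G) D) \<longleftrightarrow>
             (\<forall>f\<in>C. map \<nu> (xf f) \<in> ucq_eval (R f) (vabox M D))" for \<nu>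
    unfolding qa G_def by (simp add: vabox_aux sl)
  have "dl_eval (unf_opt (fst q) C xf R M) D = cq_eval (q_aux (fst q) C xf) (vabox (wrap G) D)"
    unfolding unf_opt_def G_def unf_correct ..
  also have "\<dots> = jucq_eval (fst q) C xf R (vabox M D)"
    unfolding cq_eval_def jucq_eval_def key by (simp add: qa)
  finally show ?thesis .
qed

end
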